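(* Let $i,j,k$ be distinct integers with $1 \leq i,j,k \leq r$. For any $l \geq 1$, the graph $\mathcal{H}(V_i,V_j,V_k)$ does not contain a copy of $K_{2,2l^2+1}$ whose part of size $2$ consists of one vertex in $V_i$ and one vertex in $V_j$ and whose part of size $2l^2+1$ lies in $V_k$.
   Context: Let $r \geq 3$ and $l \geq 1$ be integers and $q$ a power of an odd prime. Let $\alpha_1, \dots, \alpha_r$ be distinct elements of $\mathbb{F}_q$, and let $m_1, \dots, m_l$ be distinct elements of $\mathbb{F}_q^* = \mathbb{F}_q\setminus\{0\}$ such that $m_s(\alpha_k - \alpha_i) \neq m_t(\alpha_k - \alpha_j)$ whenever $1 \leq s,t \leq l$ and $i,j,k$ are distinct integers in $\{1,\dots,r\}$. For $1 \leq i \leq r$ let $V_i = \mathbb{F}_q \times \mathbb{F}_q \times \{i\}$. For $x,y \in \mathbb{F}_q$, $a \in \mathbb{F}_q^*$, $s \in \{1,\dots,l\}$ let \[ e(x,y,a,m_s) = \{(x + \alpha_i m_s a,\; y + \alpha_i m_s a^2,\; i) : 1 \leq i \leq r\}. \] $\mathcal{H}$ is the $r$-uniform hypergraph with vertex set $V_1 \cup \dots \cup V_r$ and edge set $\{e(x,y,a,m_s) : x,y \in \mathbb{F}_q,\ a \in \mathbb{F}_q^*,\ 1 \leq s \leq l\}$. For $i \neq j$, $\mathcal{H}(V_i,V_j)$ is the bipartite graph with parts $V_i$ and $V_j$ in which $u \in V_i$ and $w \in V_j$ are adjacent iff $\{u,w\} \subseteq e$ for some edge $e$ of $\mathcal{H}$.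 For distinct $i,j,k$, $\mathcal{H}(V_i,V_j,V_k)$ is the graph on $V_i \cup V_j \cup V_k$ that is the union of $\mathcal{H}(V_i,V_j)$, $\mathcal{H}(V_j,V_k)$ and $\mathcal{H}(V_k,V_i)$. *)

theory Defs
  imports Main
begin

text \<open>Vertices of the hypergraph are triples (x, y, i) with x, y in the field and i the part index.
  The finite field F_q is modelled by a type 'a of class field and finite.\<close>

definition Vpart :: "nat \<Rightarrow> ('a \<times> 'a \<times> nat) set" where
  "Vpart i = {v. snd (snd v) = i}"

definition hedge :: "(nat \<Rightarrow> 'a::field) \<Rightarrow> nat \<Rightarrow> 'a \<Rightarrow> 'a \<Rightarrow> 'a \<Rightarrow> 'a \<Rightarrow> ('a \<times> 'a \<times> nat) set" where
  "hedge \<alpha> r x y a ms = {(x + \<alpha> i * ms * a, y + \<alpha> i * ms * a ^ 2, i) | i. 1 \<le> i \<and> i \<le> r}"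

definition hedges :: "(nat \<Rightarrow> 'a::field) \<Rightarrow> (nat \<Rightarrow> 'a) \<Rightarrow> nat \<Rightarrow> nat \<Rightarrow> ('a \<times> 'a \<times> nat) set set" where
  "hedges \<alpha> m r l = {hedge \<alpha> r x y a (m s) | x y a s. a \<noteq> 0 \<and> 1 \<le> s \<and> s \<le> l}"

definition bip_adj :: "(nat \<Rightarrow> 'a::field) \<Rightarrow> (nat \<Rightarrow> 'a) \<Rightarrow> nat \<Rightarrow> nat \<Rightarrow> nat \<Rightarrow> nat
    \<Rightarrow> ('a \<times> 'a \<times> nat) \<Rightarrow> ('a \<times> 'a \<times> nat) \<Rightarrow> bool" where
  "bip_adj \<alpha> m r l i j u w \<longleftrightarrow>
     ((u \<in> Vpart i \<and> w \<in> Vpart j) \<or> (u \<in> Vpart j \<and> w \<in> Vpart i)) \<and>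
     (\<exists>e \<in> hedges \<alpha> m r l. u \<in> e \<and> w \<in> e)"

definition tri_adj :: "(nat \<Rightarrow> 'a::field) \<Rightarrow> (nat \<Rightarrow> 'a) \<Rightarrow> nat \<Rightarrow> nat \<Rightarrow> nat \<Rightarrow> nat \<Rightarrow> nat
    \<Rightarrow> ('a \<times> 'a \<times> nat) \<Rightarrow> ('a \<times> 'a \<times> nat) \<Rightarrow> bool" where
  "tri_adj \<alpha> m r l i j k u w \<longleftrightarrow>
     bip_adj \<alpha> m r l i j u w \<or> bip_adj \<alpha> m r l j k u w \<or> bip_adj \<alpha> m r l k i u w"

end

theory Submission
  imports Defs
begin

lemma three_le2:
  assumes "finite S" and "\<And>a b c. a\<in>S \<Longrightarrow> b\<in>S \<Longrightarrow> c\<in>S \<Longrightarrow> a\<noteq>b \<Longrightarrow> a\<noteq>c \<Longrightarrow> b\<noteq>c \<Longrightarrow> False"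
  shows "card S \<le> 2"
proof (rule ccontr)
  assume "\<not> card S \<le> 2"
  then have "3 \<le> card S" by simp
  then obtain T where "T \<subseteq> S" "card T = 3" by (meson obtain_subset_with_card_n)
  then obtain x y z where "T = {x,y,z}" "x \<noteq> y" "y \<noteq> z" "x \<noteq> z" by (auto simp: card_3_iff)
  then show False using assms(2)[of x y z] \<open>T \<subseteq> S\<close> by auto
qed

lemma quad3:
  fixes A B C p q s :: "'a::field"
  assumes "A \<noteq> 0" "A*p^2 + B*p + C = 0" "A*q^2 + B*q + C = 0" "A*s^2 + B*s + C = 0"
    "p \<noteq> q" "p \<noteq> s" "q \<noteq> s"
  shows False
proof -
  have "(p - q) * (A*(p+q) + B) = (A*p^2 + B*p + C) - (A*q^2 + B*q + C)"
    by (simp add: power2_eq_square algebra_simps)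
  then have 1: "A*(p+q) + B = 0" using assms by simp
  have "(p - s) * (A*(p+s) + B) = (A*p^2 + B*p + C) - (A*s^2 + B*s + C)"
    by (simp add: power2_eq_square algebra_simps)
  then have 2: "A*(p+s) + B = 0" using assms by simp
  have "A * (q - s) = (A*(p+q) + B) - (A*(p+s) + B)" by (simp add: algebra_simps)
  then have "A * (q - s) = 0" using 1 2 by simp
  then show False using assms by simp
qed

lemma edge_par:
  assumes "\<exists>e \<in> hedges \<alpha> m r l. u \<in> e \<and> z \<in> e" "u \<in> Vpart p" "z \<in> Vpart q"
  shows "\<exists>s\<in>{1..l}. (\<alpha> q - \<alpha> p) * m s * (fst (snd z) - fst (snd u)) = (fst z - fst u)^2"
proof -
  obtain x y a s where as: "a \<noteq> 0" "1 \<le> s" "s \<le> l" and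
    u: "u \<in> hedge \<alpha> r x y a (m s)" and z: "z \<in> hedge \<alpha> r x y a (m s)"
    using assms(1) unfolding hedges_def by blast
  from u obtain i' where u': "u = (x + \<alpha> i' * m s * a, y + \<alpha> i' * m s * a ^ 2, i')"
    unfolding hedge_def by blast
  from z obtain k' where z': "z = (x + \<alpha> k' * m s * a, y + \<alpha> k' * m s * a ^ 2, k')"
    unfolding hedge_def by blast
  have "i' = p" using u' assms(2) by (simp add: Vpart_def)
  moreover have "k' = q" using z' assms(3) by (simp add: Vpart_def)
  ultimately have "(\<alpha> q - \<alpha> p) * m s * (fst (snd z) - fst (snd u)) = (fst z - fst u)^2"
    using u' z' by (simp add: power2_eq_square algebra_simps)
  then show ?thesis using as by auto
qed

theorem lemma3p9:
  fixes \<alpha> m :: "nat \<Rightarrow> 'a::{field, finite}" and r l i j k :: nat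
  assumes odd_q: "odd (card (UNIV :: 'a set))"
    and r3: "r \<ge> 3" and l1: "l \<ge> 1"
    and alpha_inj: "inj_on \<alpha> {1..r}"
    and m_inj: "inj_on m {1..l}"
    and m_nz: "\<And>s. s \<in> {1..l} \<Longrightarrow> m s \<noteq> 0"
    and m_cond: "\<And>s t a b c. s \<in> {1..l} \<Longrightarrow> t \<in> {1..l} \<Longrightarrow>
        a \<in> {1..r} \<Longrightarrow> b \<in> {1..r} \<Longrightarrow> c \<in> {1..r} \<Longrightarrow> a \<noteq> b \<Longrightarrow> a \<noteq> c \<Longrightarrow> b \<noteq> c \<Longrightarrow>
        m s * (\<alpha> c - \<alpha> a) \<noteq> m t * (\<alpha> c - \<alpha> b)"
    and ijk: "i \<in> {1..r}" "j \<in> {1..r}" "k \<in> {1..r}" "i \<noteq> j" "i \<noteq> k" "j \<noteq> k"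
  shows "\<not> (\<exists>u w W. u \<in> Vpart i \<and> w \<in> Vpart j \<and> W \<subseteq> Vpart k \<and>
              card W = 2 * l ^ 2 + 1 \<and>
              (\<forall>z \<in> W. tri_adj \<alpha> m r l i j k u z \<and> tri_adj \<alpha> m r l i j k w z))"
proof
  assume "\<exists>u w W. u \<in> Vpart i \<and> w \<in> Vpart j \<and> W \<subseteq> Vpart k \<and>
              card W = 2 * l ^ 2 + 1 \<and>
              (\<forall>z \<in> W. tri_adj \<alpha> m r l i j k u z \<and> tri_adj \<alpha> m r l i j k w z)"
  then obtain u w W where uV: "u \<in> Vpart i" and wV: "w \<in> Vpart j" and WV: "W \<subseteq> Vpart k"
    and cW: "card W = 2 * l ^ 2 + 1"
    and adj: "\<forall>z \<in> W. tri_adj \<alpha> m r l i j k u z \<and> tri_adj \<alpha> m r l i j k w z" by blast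
  have finW: "finite W" using cW by (intro card_ge_0_finite) simp
  define D where "D = (\<lambda>s. (\<alpha> k - \<alpha> i) * m s)"
  define E where "E = (\<lambda>t. (\<alpha> k - \<alpha> j) * m t)"
  define P :: "nat \<times> nat \<Rightarrow> 'a \<times> 'a \<times> nat \<Rightarrow> bool" where "P = (\<lambda>(s,t) z. D s * (fst (snd z) - fst (snd u)) = (fst z - fst u)^2 \<and>
                                 E t * (fst (snd z) - fst (snd w)) = (fst z - fst w)^2)"
  define I where "I = {1..l} \<times> {1..l}"
  have tri_e: "\<exists>e \<in> hedges \<alpha> m r l. x \<in> e \<and> z \<in> e" if "tri_adj \<alpha> m r l i j k x z" for x z
    using that unfolding tri_adj_def bip_adj_def by blast
  have cover: "W \<subseteq> (\<Union>p\<in>I. {z\<in>W. P p z})"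
  proof
    fix z assume zW: "z \<in> W"
    have zk: "z \<in> Vpart k" using zW WV by auto
    obtain s where s: "s \<in> {1..l}" "D s * (fst (snd z) - fst (snd u)) = (fst z - fst u)^2"
      using edge_par[OF tri_e[of u z] uV zk] adj zW unfolding D_def by blast
    obtain t where t: "t \<in> {1..l}" "E t * (fst (snd z) - fst (snd w)) = (fst z - fst w)^2"
      using edge_par[OF tri_e[of w z] wV zk] adj zW unfolding E_def by blast
    show "z \<in> (\<Union>p\<in>I. {z\<in>W. P p z})"
      using s t zW unfolding P_def I_def by (intro UN_I[of "(s,t)"]) auto
  qed
  have ai: "\<alpha> k \<noteq> \<alpha> i" using alpha_inj ijk unfolding inj_on_def by metis
  have each: "card {z\<in>W. P p z} \<le> 2" if pI: "p \<in> I" for p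
  proof -
    obtain s t where p: "p = (s,t)" and st: "s \<in> {1..l}" "t \<in> {1..l}" using pI unfolding I_def by auto
    have Dnz: "D s \<noteq> 0" using ai m_nz st unfolding D_def by simp
    have EDnz: "E t - D s \<noteq> 0"
      using m_cond[of s t i j k] st ijk unfolding D_def E_def by (auto simp: algebra_simps)
    define A where "A = E t - D s"
    define B where "B = - 2 * E t * fst u + 2 * D s * fst w"
    define C where "C = E t * (fst u)^2 - D s * (fst w)^2 - D s * E t * (fst (snd w) - fst (snd u))"
    have root: "A * (fst z)^2 + B * fst z + C = 0" if "z \<in> {z\<in>W. P p z}" for z
    proof -
      have e1: "D s * (fst (snd z) - fst (snd u)) = (fst z - fst u)^2"
       and e2: "E t * (fst (snd z) - fst (snd w)) = (fst z - fst w)^2"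
        using that p unfolding P_def by auto
      have "E t * (fst z - fst u)^2 - D s * (fst z - fst w)^2
          = E t * (D s * (fst (snd z) - fst (snd u))) - D s * (E t * (fst (snd z) - fst (snd w)))"
        using e1 e2 by simp
      also have "\<dots> = D s * E t * (fst (snd w) - fst (snd u))" by (simp add: algebra_simps)
      finally have "E t * (fst z - fst u)^2 - D s * (fst z - fst w)^2 - D s * E t * (fst (snd w) - fst (snd u)) = 0"
        by simp
      moreover have "A * (fst z)^2 + B * fst z + C = E t * (fst z - fst u)^2 - D s * (fst z - fst w)^2 - D s * E t * (fst (snd w) - fst (snd u))"
        unfolding A_def B_def C_def by (simp add: power2_eq_square algebra_simps)
      ultimately show ?thesis by simp
    qed
    have injx: "z = z'" if "z \<in> {z\<in>W. P p z}" "z' \<in> {z\<in>W. P p z}" "fst z = fst z'" for z z'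
    proof -
      have e1: "D s * (fst (snd z) - fst (snd u)) = (fst z - fst u)^2"
       and e2: "D s * (fst (snd z') - fst (snd u)) = (fst z' - fst u)^2"
        using that p unfolding P_def by auto
      have "D s * (fst (snd z) - fst (snd u)) = D s * (fst (snd z') - fst (snd u))"
        using e1 e2 that(3) by simp
      then have "fst (snd z) = fst (snd z')" using Dnz by simp
      moreover have "snd (snd z) = k" "snd (snd z') = k" using that WV by (auto simp: Vpart_def)
      ultimately show ?thesis using that(3) by (simp add: prod_eq_iff)
    qed
    show ?thesis
    proof (rule three_le2)
      show "finite {z\<in>W. P p z}" using finW by simp
    next
      fix a b c assume H: "a \<in> {z\<in>W. P p z}" "b \<in> {z\<in>W. P p z}" "c \<in> {z\<in>W. P p z}"
        "a \<noteq> b" "a \<noteq> c" "b \<noteq> c"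
      show False
        using quad3[of A "fst a" B C "fst b" "fst c"] root[OF H(1)] root[OF H(2)] root[OF H(3)]
          injx[OF H(1) H(2)] injx[OF H(1) H(3)] injx[OF H(2) H(3)] H(4-6) EDnz
        unfolding A_def by blast
    qed
  qed
  have "card W \<le> card (\<Union>p\<in>I. {z\<in>W. P p z})" using cover finW by (intro card_mono) (auto simp: I_def)
  also have "\<dots> \<le> (\<Sum>p\<in>I. card {z\<in>W. P p z})" by (rule card_UN_le) (simp add: I_def)
  also have "\<dots> \<le> (\<Sum>p\<in>I. 2)" using each by (intro sum_mono) auto
  also have "\<dots> = 2 * l ^ 2" by (simp add: I_def card_cartesian_product power2_eq_square)
  finally show False using cW by simp
qed

end
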